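(* Assume Condition AGCT (see context) holds and that the event $\mathrm{Good}_m$ occurs. Then for every $x\in A^{-1}_{-\infty}$, $$\big\|d(\hat p_n(\cdot\mid T(x)),p(\cdot\mid x))\big\|_{L,k}\le c_{T(x)}+\|\mathrm{conf}(T(x))\|_{L,r}.$$
   Context: Notation. $A$ is a finite alphabet. For $k\ge0$, $A^{-1}_{-k}$ is the set of strings $w=w_{-k}\cdots w_{-1}$ of length $k$ (for $k=0$ the empty string $e$); $A^{-1}_{-\infty}$ is the set of left-infinite sequences $x=\cdots x_{-2}x_{-1}$; $A^*=A^{-1}_{-\infty}\cup\bigcup_{k\ge0}A^{-1}_{-k}$. $|w|$ is the length and $w^{-1}_{-k}=w_{-k}\cdots w_{-1}$ the suffix of length $k$. $w\preceq w'$ ($w'\succeq w$) means $w$ is a suffix of $w'$. For nonempty $w$, $\mathrm{par}(w)=w_{-|w|+1}\cdots w_{-1}$. A tree is a set $\widetilde T\subseteq A^*$ containing $e$ and the parent of each of its nonempty elements; a leaf is an element that is the parent of no element; $\widetilde T$ is complete if every non-leaf node has exactly $|A|$ children. For a tree $\widetilde T$ and $x\in A^{-1}_{-\infty}$, $K_{\widetilde T}(x)=\sup\{k:x^{-1}_{-k}\in\widetilde T\}$ and $\widetilde T(x)=x^{-1}_{-K_{\widetilde T}(x)}$. $\Delta^A$ is the set of probability distributions on $A$. For $v\in\mathbb R^L$, $\|v\|_{L,q}=(\frac1L\sum_\ell|v_\ell|^q)^{1/q}$ ($1\le q<\infty$), $\|v\|_{L,\infty}=\max_\ell|v_\ell|$.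 Model. For $\ell=1,\dots,L$, $X(\ell)$ is a stationary ergodic $A$-valued process with transition probabilities $p_\ell(a\mid x)=\Pr(X_0(\ell)=a\mid X^{-1}_{-\infty}(\ell)=x)$; $p(\cdot\mid x)=(p_\ell(\cdot\mid x))_\ell$, and for $z\in(A^{-1}_{-\infty})^L$, $p(\cdot\mid z)=(p_\ell(\cdot\mid z(\ell)))_\ell$. One observes $X_1^n(\ell)$ for each $\ell$. $N_{j,\ell}(w)$ is the number of occurrences of the finite string $w$ as a consecutive block in $X_1^j(\ell)$ (0 for infinite $w$). If $\min_\ell N_{n-1,\ell}(w)>0$: $\hat p_{n,\ell}(a\mid w)=N_{n,\ell}(wa)/N_{n-1,\ell}(w)$ and $\bar p_{n,\ell}(a\mid w)=\frac{1}{N_{n-1,\ell}(w)}\sum_{i=|w|+1}^{n}\mathbf 1\{X^{i-1}_{i-|w|}(\ell)=w\}p_\ell(a\mid X^{i-1}_{-\infty}(\ell))$; otherwise both equal $1/|A|$. Metrics $d_\ell:\Delta^A\times\Delta^A\to[0,1]$; $d(q,q')=(d_\ell(q_\ell,q'_\ell))_{\ell}$ for families of distributions; $\hat p_n(\cdot|w)=(\hat p_{n,\ell}(\cdot|w))_\ell$, similarly $\bar p_n$. Confidence radii $\mathrm{conf}(w)=(\mathrm{conf}_\ell(w))_{\ell=1}^L$, $w\in A^*$. Approximation error: $c_w=\sup\{\|d(p(\cdot\mid z),\bar p_n(\cdot\mid w))\|_{L,k}:z\in(A^{-1}_{-\infty})^L,\ z(\ell)\succeq w\ \forall\ell\}$.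 The oracle tree $T$ is a minimizer over finite complete trees $\widetilde T$ of $\sup_{x\in A^{-1}_{-\infty}}\big(c_{\widetilde T(x)}+\|\mathrm{conf}(\widetilde T(x))\|_{L,r}\big)$. Event $\mathrm{Good}_m$: for all $w\in A^*$ with $\min_\ell N_{n-1,\ell}(w)>0$, $\|(d_\ell(\bar p_{n,\ell}(\cdot|w),\hat p_{n,\ell}(\cdot|w))/\mathrm{conf}_\ell(w))_\ell\|_{L,m}\le1$. Condition AGCT: the setting holds with $0\le\mathrm{conf}_\ell(w)\le1$, $\mathrm{conf}_\ell(w)\le\mathrm{conf}_\ell(w')$ whenever $w\preceq w'$, and positive extended integers $k,r,m$ with either ($k\le m$, $r\ge km/(m-k)$) or $k\le r=m=\infty$. *)

theory Defs
  imports Complex_Main "HOL-Library.Extended_Nat"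
begin

text \<open>A finite string w = w_{-k} ... w_{-1} is the list [w_{-1}, w_{-2}, ..., w_{-k}]
  (most recent symbol first). Hence "w is a suffix of w'" becomes "w is a list prefix of w'",
  par(w) = butlast w, and the string w a (a appended on the right) is a # w.
  A left-infinite sequence x = ... x_{-2} x_{-1} is a function x :: nat => 'a with x i = x_{-(i+1)}.
  The processes are indexed by l in {1..L}; the (two-sided) realisation of process l is
  X l :: int => 'a, the observed sample being X l 1, ..., X l n and X l t for t <= 0 the infinite past.\<close>

datatype 'a str = Fin "'a list" | Inf "nat \<Rightarrow> 'a"

definition extends :: "(nat \<Rightarrow> 'a) \<Rightarrow> 'a list \<Rightarrow> bool" where
  "extends x w \<longleftrightarrow> (\<forall>i<length w. x i = w ! i)"

fun str_suffix :: "'a str \<Rightarrow> 'a str \<Rightarrow> bool" where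
  "str_suffix (Fin w) (Fin w') = (\<exists>u. w' = w @ u)"
| "str_suffix (Fin w) (Inf x) = extends x w"
| "str_suffix (Inf x) (Fin w) = False"
| "str_suffix (Inf x) (Inf y) = (x = y)"

definition lnorm :: "nat \<Rightarrow> enat \<Rightarrow> (nat \<Rightarrow> real) \<Rightarrow> real" where
  "lnorm L q v = (case q of
      \<infinity> \<Rightarrow> Max ((\<lambda>l. \<bar>v l\<bar>) ` {1..L})
    | enat q' \<Rightarrow> ((\<Sum>l\<in>{1..L}. \<bar>v l\<bar> ^ q') / real L) powr (1 / real q'))"

definition prob_dist :: "('a::finite \<Rightarrow> real) \<Rightarrow> bool" where
  "prob_dist q \<longleftrightarrow> (\<forall>a. 0 \<le> q a) \<and> sum q UNIV = 1"

definition simplex_metric01 :: "(('a::finite \<Rightarrow> real) \<Rightarrow> ('a \<Rightarrow> real) \<Rightarrow> real) \<Rightarrow> bool" where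
  "simplex_metric01 dl \<longleftrightarrow>
     (\<forall>q q'. prob_dist q \<and> prob_dist q' \<longrightarrow>
        0 \<le> dl q q' \<and> dl q q' \<le> 1 \<and> (dl q q' = 0 \<longleftrightarrow> q = q') \<and> dl q q' = dl q' q) \<and>
     (\<forall>q q' q''. prob_dist q \<and> prob_dist q' \<and> prob_dist q'' \<longrightarrow>
        dl q q'' \<le> dl q q' + dl q' q'')"

definition Nocc :: "(int \<Rightarrow> 'a) \<Rightarrow> int \<Rightarrow> 'a list \<Rightarrow> nat" where
  "Nocc s j w = card {t::int. int (length w) \<le> t \<and> t \<le> j \<and>
                               (\<forall>i<length w. s (t - int i) = w ! i)}"

definition past :: "(int \<Rightarrow> 'a) \<Rightarrow> int \<Rightarrow> (nat \<Rightarrow> 'a)" where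
  "past s t = (\<lambda>j. s (t - 1 - int j))"

definition allpos :: "nat \<Rightarrow> (nat \<Rightarrow> int \<Rightarrow> 'a) \<Rightarrow> nat \<Rightarrow> 'a list \<Rightarrow> bool" where
  "allpos L X n w \<longleftrightarrow> (\<forall>l\<in>{1..L}. 0 < Nocc (X l) (int n - 1) w)"

definition phat :: "nat \<Rightarrow> (nat \<Rightarrow> int \<Rightarrow> 'a::finite) \<Rightarrow> nat \<Rightarrow> nat \<Rightarrow> 'a list \<Rightarrow> 'a \<Rightarrow> real" where
  "phat L X n l w a = (if allpos L X n w
      then real (Nocc (X l) (int n) (a # w)) / real (Nocc (X l) (int n - 1) w)
      else 1 / real (card (UNIV :: 'a set)))"

definition pbar :: "nat \<Rightarrow> (nat \<Rightarrow> int \<Rightarrow> 'a::finite) \<Rightarrow> (nat \<Rightarrow> (nat \<Rightarrow> 'a) \<Rightarrow> 'a \<Rightarrow> real)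
                    \<Rightarrow> nat \<Rightarrow> nat \<Rightarrow> 'a list \<Rightarrow> 'a \<Rightarrow> real" where
  "pbar L X p n l w a = (if allpos L X n w
      then (\<Sum>i\<in>{int (length w) + 1 .. int n}.
              (if (\<forall>j<length w. X l (i - 1 - int j) = w ! j) then p l (past (X l) i) a else 0))
           / real (Nocc (X l) (int n - 1) w)
      else 1 / real (card (UNIV :: 'a set)))"

definition capp :: "nat \<Rightarrow> enat \<Rightarrow> (nat \<Rightarrow> ('a::finite \<Rightarrow> real) \<Rightarrow> ('a \<Rightarrow> real) \<Rightarrow> real)
     \<Rightarrow> (nat \<Rightarrow> (nat \<Rightarrow> 'a) \<Rightarrow> 'a \<Rightarrow> real) \<Rightarrow> (nat \<Rightarrow> int \<Rightarrow> 'a) \<Rightarrow> nat \<Rightarrow> 'a list \<Rightarrow> real" where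
  "capp L k d p X n w = Sup {lnorm L k (\<lambda>l. d l (p l (z l)) (pbar L X p n l w)) | z.
                              \<forall>l\<in>{1..L}. extends (z l) w}"

definition is_tree :: "'a list set \<Rightarrow> bool" where
  "is_tree T \<longleftrightarrow> [] \<in> T \<and> (\<forall>w\<in>T. w \<noteq> [] \<longrightarrow> butlast w \<in> T)"

definition children :: "'a list set \<Rightarrow> 'a list \<Rightarrow> 'a list set" where
  "children T u = {w\<in>T. w \<noteq> [] \<and> butlast w = u}"

definition finite_complete_tree :: "'a::finite list set \<Rightarrow> bool" where
  "finite_complete_tree T \<longleftrightarrow> finite T \<and> is_tree T \<and>
     (\<forall>u\<in>T. children T u \<noteq> {} \<longrightarrow> card (children T u) = card (UNIV :: 'a set))"

definition tree_K :: "'a list set \<Rightarrow> (nat \<Rightarrow> 'a) \<Rightarrow> nat" where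
  "tree_K T x = Sup {k. map x [0..<k] \<in> T}"

definition tree_node :: "'a list set \<Rightarrow> (nat \<Rightarrow> 'a) \<Rightarrow> 'a list" where
  "tree_node T x = map x [0..<tree_K T x]"

definition tree_objective :: "nat \<Rightarrow> enat \<Rightarrow> enat \<Rightarrow> (nat \<Rightarrow> ('a::finite \<Rightarrow> real) \<Rightarrow> ('a \<Rightarrow> real) \<Rightarrow> real)
     \<Rightarrow> (nat \<Rightarrow> (nat \<Rightarrow> 'a) \<Rightarrow> 'a \<Rightarrow> real) \<Rightarrow> (nat \<Rightarrow> int \<Rightarrow> 'a) \<Rightarrow> nat
     \<Rightarrow> (nat \<Rightarrow> 'a str \<Rightarrow> real) \<Rightarrow> 'a list set \<Rightarrow> real" where
  "tree_objective L k r d p X n conf T =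
     Sup (range (\<lambda>x. capp L k d p X n (tree_node T x)
                     + lnorm L r (\<lambda>l. conf l (Fin (tree_node T x)))))"

definition is_optimal_tree :: "nat \<Rightarrow> enat \<Rightarrow> enat \<Rightarrow> (nat \<Rightarrow> ('a::finite \<Rightarrow> real) \<Rightarrow> ('a \<Rightarrow> real) \<Rightarrow> real)
     \<Rightarrow> (nat \<Rightarrow> (nat \<Rightarrow> 'a) \<Rightarrow> 'a \<Rightarrow> real) \<Rightarrow> (nat \<Rightarrow> int \<Rightarrow> 'a) \<Rightarrow> nat
     \<Rightarrow> (nat \<Rightarrow> 'a str \<Rightarrow> real) \<Rightarrow> 'a list set \<Rightarrow> bool" where
  "is_optimal_tree L k r d p X n conf T \<longleftrightarrow> finite_complete_tree T \<and>
     (\<forall>T'. finite_complete_tree T' \<longrightarrow>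
        tree_objective L k r d p X n conf T \<le> tree_objective L k r d p X n conf T')"

text \<open>event Good_m (ratio d/conf read as +infinity if conf = 0 < d, and 0/0 = 0)\<close>
definition Good :: "nat \<Rightarrow> enat \<Rightarrow> (nat \<Rightarrow> ('a::finite \<Rightarrow> real) \<Rightarrow> ('a \<Rightarrow> real) \<Rightarrow> real)
     \<Rightarrow> (nat \<Rightarrow> (nat \<Rightarrow> 'a) \<Rightarrow> 'a \<Rightarrow> real) \<Rightarrow> (nat \<Rightarrow> int \<Rightarrow> 'a) \<Rightarrow> nat
     \<Rightarrow> (nat \<Rightarrow> 'a str \<Rightarrow> real) \<Rightarrow> bool" where
  "Good L m d p X n conf \<longleftrightarrow> (\<forall>w. allpos L X n w \<longrightarrow>
      (\<forall>l\<in>{1..L}. conf l (Fin w) = 0 \<longrightarrow> d l (pbar L X p n l w) (phat L X n l w) = 0) \<and>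
      lnorm L m (\<lambda>l. d l (pbar L X p n l w) (phat L X n l w) / conf l (Fin w)) \<le> 1)"

text \<open>exponent condition of AGCT: positive extended integers k r m with
  (k <= m and r >= km/(m-k)) or k <= r = m = infinity. In the first alternative k, m are finite,
  and km/(m-k) = +infinity when k = m.\<close>
definition agct_exponents :: "enat \<Rightarrow> enat \<Rightarrow> enat \<Rightarrow> bool" where
  "agct_exponents k r m \<longleftrightarrow> 1 \<le> k \<and> 1 \<le> r \<and> 1 \<le> m \<and>
     ((\<exists>k' m'. k = enat k' \<and> m = enat m' \<and> k' \<le> m' \<and>
         (k' = m' \<longrightarrow> r = \<infinity>) \<and>
         (k' < m' \<longrightarrow> (case r of \<infinity> \<Rightarrow> True
                          | enat r' \<Rightarrow> real k' * real m' / real (m' - k') \<le> real r')))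
      \<or> (k \<le> r \<and> r = \<infinity> \<and> m = \<infinity>))"

end

theory Submission
  imports Defs "HOL-Analysis.Convex"
begin


lemma pow_powr_inv: fixes c::real assumes "0 \<le> c" "0 < q" shows "(c ^ q) powr (1 / real q) = c"
proof (cases "c = 0")
  case True thus ?thesis using assms by simp
next
  case False
  hence "c > 0" using assms by simp
  hence "(c ^ q) powr (1 / real q) = (c powr real q) powr (1/real q)" by (simp add: powr_realpow)
  also have "\<dots> = c" using \<open>c>0\<close> assms by (simp add: powr_powr)
  finally show ?thesis .
qed

lemma powr_inv_pow: fixes x::real assumes "0 \<le> x" "0 < q" shows "(x powr (1 / real q)) ^ q = x"
proof (cases "x = 0")
  case True thus ?thesis using assms by simp
next
  case False
  hence "x > 0" using assms by simp
  hence "(x powr (1 / real q)) ^ q = (x powr (1/real q)) powr real q" by (simp add: powr_realpow)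
  also have "\<dots> = x" using \<open>x>0\<close> assms by (simp add: powr_powr)
  finally show ?thesis .
qed

lemma lnorm_fin: assumes "\<forall>l\<in>{1..L}. 0 \<le> v l"
  shows "lnorm L (enat q) v = ((\<Sum>l\<in>{1..L}. v l ^ q) / real L) powr (1 / real q)"
proof -
  have "(\<Sum>l\<in>{1..L}. \<bar>v l\<bar> ^ q) = (\<Sum>l\<in>{1..L}. v l ^ q)"
    using assms by (intro sum.cong) auto
  thus ?thesis unfolding lnorm_def by simp
qed

lemma lnorm_inf: assumes "\<forall>l\<in>{1..L}. 0 \<le> v l"
  shows "lnorm L \<infinity> v = Max (v ` {1..L})"
proof -
  have "(\<lambda>x. \<bar>v x\<bar>) ` {1..L} = v ` {1..L}" using assms by (intro image_cong) auto
  thus ?thesis unfolding lnorm_def by simp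
qed

lemma lnorm_cong: assumes "\<forall>l\<in>{1..L}. v l = v' l" shows "lnorm L q v = lnorm L q v'"
proof -
  have "(\<lambda>x. \<bar>v x\<bar>) ` {1..L} = (\<lambda>x. \<bar>v' x\<bar>) ` {1..L}" using assms by (intro image_cong) auto
  moreover have "\<And>q. (\<Sum>x\<in>{1..L}. \<bar>v x\<bar> ^ q) = (\<Sum>x\<in>{1..L}. \<bar>v' x\<bar> ^ q)" using assms by (intro sum.cong) auto
  ultimately show ?thesis unfolding lnorm_def by (simp split: enat.splits)
qed

lemma lnorm_fin_le:
  assumes "1 \<le> L" "1 \<le> q" "\<forall>l\<in>{1..L}. 0 \<le> v l" "0 \<le> c"
    "(\<Sum>l\<in>{1..L}. v l ^ q) / real L \<le> c ^ q"
  shows "lnorm L (enat q) v \<le> c"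
proof -
  have "0 \<le> (\<Sum>l\<in>{1..L}. v l ^ q) / real L" using assms(3) by (auto intro!: divide_nonneg_nonneg sum_nonneg)
  hence "((\<Sum>l\<in>{1..L}. v l ^ q) / real L) powr (1 / real q) \<le> (c^q) powr (1/real q)"
    using assms(5) by (intro powr_mono2) auto
  thus ?thesis using assms by (simp add: lnorm_fin pow_powr_inv)
qed

lemma lnorm_fin_ge:
  assumes "1 \<le> q" "\<forall>l\<in>{1..L}. 0 \<le> v l" "lnorm L (enat q) v \<le> c"
  shows "(\<Sum>l\<in>{1..L}. v l ^ q) / real L \<le> c ^ q"
proof -
  define x where "x = (\<Sum>l\<in>{1..L}. v l ^ q) / real L"
  have x0: "0 \<le> x" unfolding x_def using assms(2) by (auto intro!: divide_nonneg_nonneg sum_nonneg)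
  have "x powr (1/real q) \<le> c" using assms by (simp add: lnorm_fin x_def)
  hence "(x powr (1/real q)) ^ q \<le> c ^ q" by (intro power_mono) auto
  thus ?thesis using powr_inv_pow[OF x0, of q] assms(1) x_def by simp
qed

lemma lnorm_nonneg: "0 \<le> lnorm L q v" if "1 \<le> L"
proof -
  have "\<bar>v 1\<bar> \<le> Max ((\<lambda>l. \<bar>v l\<bar>) ` {1..L})" using that by (intro Max_ge) auto
  hence "0 \<le> Max ((\<lambda>l. \<bar>v l\<bar>) ` {1..L})" by linarith
  thus ?thesis unfolding lnorm_def by (simp split: enat.splits)
qed

lemma lnorm_le_const:
  assumes "1 \<le> L" "1 \<le> q" "\<forall>l\<in>{1..L}. 0 \<le> v l \<and> v l \<le> c"
  shows "lnorm L q v \<le> c"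
proof (cases q)
  case (enat q')
  have c0: "0 \<le> c" using assms(1,3) by force
  have "(\<Sum>l\<in>{1..L}. v l ^ q') \<le> (\<Sum>l\<in>{1..L}. c ^ q')"
    using assms(3) by (intro sum_mono power_mono) auto
  hence "(\<Sum>l\<in>{1..L}. v l ^ q') / real L \<le> c ^ q'" using assms(1) by (simp add: divide_le_eq mult.commute)
  moreover have "1 \<le> q'" using enat assms(2) by (simp add: one_enat_def)
  ultimately show ?thesis using enat assms c0 lnorm_fin_le[of L q' v c] by auto
next
  case infinity thus ?thesis using assms by (simp add: lnorm_inf)
qed




lemma amgm_gen: fixes a b \<alpha> \<beta> :: real
  assumes "0 < a" "0 < b" "0 \<le> \<alpha>" "0 \<le> \<beta>" "\<alpha> + \<beta> \<le> 1"
  shows "a powr \<alpha> * b powr \<beta> \<le> \<alpha>*a + \<beta>*b + (1 - \<alpha> - \<beta>)"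
proof (cases "\<alpha> + \<beta> = 0")
  case True hence "\<alpha> = 0" "\<beta> = 0" using assms by auto
  thus ?thesis using assms by simp
next
  case False
  define s where "s = \<alpha> + \<beta>"
  have s0: "0 < s" using False assms s_def by simp
  define c where "c = (\<alpha>/s)*a + (\<beta>/s)*b"
  have c0: "0 < c" unfolding c_def using assms s0 False
    by (smt (verit) divide_nonneg_pos mult_nonneg_nonneg mult_pos_pos s_def zero_less_divide_iff)
  have "a powr \<alpha> * b powr \<beta> = (a powr (\<alpha>/s) * b powr (\<beta>/s)) powr s"
    using assms s0 by (simp add: powr_mult powr_powr)
  also have "\<dots> \<le> c powr s"
    unfolding c_def using assms s0 s_def
    by (intro powr_mono2 Youngs_inequality_0) (auto simp: add_divide_distrib[symmetric])
  also have "\<dots> = c powr s * 1 powr (1 - s)" by simp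
  also have "\<dots> \<le> s * c + (1 - s) * 1"
    using c0 s0 assms s_def by (intro Youngs_inequality_0) auto
  also have "\<dots> = \<alpha>*a + \<beta>*b + (1 - \<alpha> - \<beta>)"
  proof -
    have "s * c = \<alpha>*a + \<beta>*b" unfolding c_def using s0 by (simp add: distrib_left)
    thus ?thesis using s_def by simp
  qed
  finally show ?thesis .
qed

lemma amgm3: fixes f h :: real and k m r :: nat
  assumes "0 \<le> f" "0 \<le> h" "1 \<le> k" "k \<le> m" "1 \<le> r" "real k / m + real k / r \<le> 1"
  shows "f^k * h^k \<le> real k / m * f^m + real k / r * h^r + (1 - real k / m - real k / r)"
proof (cases "f = 0 \<or> h = 0")
  case True
  have "0 \<le> real k / m * f^m + real k / r * h^r" using assms by simp
  thus ?thesis using True assms by (auto simp: power_0_left)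
next
  case False
  hence fp: "f > 0" and hp: "h > 0" using assms by auto
  have m0: "m > 0" using assms by simp
  have "f^k * h^k = (f^m) powr (real k / m) * (h^r) powr (real k / r)"
    using fp hp m0 assms by (simp add: powr_realpow[symmetric] powr_powr)
  also have "\<dots> \<le> real k / m * f^m + real k / r * h^r + (1 - real k / m - real k / r)"
    using fp hp assms by (intro amgm_gen) auto
  finally show ?thesis .
qed

lemma amgm2: fixes f :: real and k m :: nat
  assumes "0 \<le> f" "1 \<le> k" "k \<le> m"
  shows "f^k \<le> real k / m * f^m + (1 - real k / m)"
proof (cases "f = 0")
  case True thus ?thesis using assms by (auto simp: power_0_left)
next
  case False
  hence fp: "f > 0" using assms by auto
  have m0: "m > 0" using assms by simp
  have "f^k = (f^m) powr (real k / m) * 1 powr 0"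
    using fp m0 assms by (simp add: powr_realpow[symmetric] powr_powr)
  also have "\<dots> \<le> real k / m * f^m + 0 * 1 + (1 - real k / m - 0)"
    using fp assms by (intro amgm_gen) auto
  finally show ?thesis by simp
qed

lemma convex_pow_nonneg: "convex_on {0::real..} (\<lambda>x. x^n)"
proof (cases "even n")
  case True thus ?thesis using convex_power_even convex_on_subset by blast
next
  case False thus ?thesis using convex_power_odd by blast
qed




lemma lnorm_triangle:
  assumes L: "1 \<le> L" and q: "1 \<le> q" and nn: "\<forall>l\<in>{1..L}. 0 \<le> u l \<and> 0 \<le> v l"
  shows "lnorm L q (\<lambda>l. u l + v l) \<le> lnorm L q u + lnorm L q v"
proof (cases q)
  case infinity
  have fin: "finite {1..L}" and ne: "{1..L} \<noteq> {}" using L by auto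
  have "Max ((\<lambda>l. u l + v l) ` {1..L}) \<le> Max (u ` {1..L}) + Max (v ` {1..L})"
  proof (subst Max_le_iff)
    show "\<forall>a\<in>(\<lambda>l. u l + v l) ` {1..L}. a \<le> Max (u ` {1..L}) + Max (v ` {1..L})"
    proof
      fix a assume "a \<in> (\<lambda>l. u l + v l) ` {1..L}"
      then obtain l where l: "l \<in> {1..L}" "a = u l + v l" by auto
      have "u l \<le> Max (u ` {1..L})" "v l \<le> Max (v ` {1..L})" using l fin by auto
      thus "a \<le> Max (u ` {1..L}) + Max (v ` {1..L})" using l(2) by linarith
    qed
  qed (use fin ne in auto)
  thus ?thesis using infinity nn by (simp add: lnorm_inf)
next
  case (enat q')
  have q': "1 \<le> q'" using q enat by (simp add: one_enat_def)
  define A where "A = lnorm L q u"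
  define B where "B = lnorm L q v"
  have A0: "0 \<le> A" "0 \<le> B" unfolding A_def B_def using L lnorm_nonneg by auto
  have SA: "(\<Sum>l\<in>{1..L}. u l ^ q') / real L \<le> A ^ q'"
    using lnorm_fin_ge[of q' L u A] q' nn enat A_def by auto
  have SB: "(\<Sum>l\<in>{1..L}. v l ^ q') / real L \<le> B ^ q'"
    using lnorm_fin_ge[of q' L v B] q' nn enat B_def by auto
  have zero: "\<forall>l\<in>{1..L}. w l = 0"
    if "\<forall>l\<in>{1..L}. 0 \<le> w l" "(\<Sum>l\<in>{1..L}. w l ^ q') / real L \<le> 0" for w :: "nat \<Rightarrow> real"
  proof -
    have "(\<Sum>l\<in>{1..L}. w l ^ q') \<le> 0" using that L by (simp add: divide_le_0_iff)
    moreover have "\<forall>l\<in>{1..L}. 0 \<le> w l ^ q'" using that by auto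
    moreover have "0 \<le> (\<Sum>l\<in>{1..L}. w l ^ q')" using that(1) by (intro sum_nonneg) auto
    ultimately have "(\<Sum>l\<in>{1..L}. w l ^ q') = 0" "\<forall>l\<in>{1..L}. 0 \<le> w l ^ q'" by linarith+
    hence "\<forall>l\<in>{1..L}. w l ^ q' = 0"
      using sum_nonneg_eq_0_iff[of "{1..L}" "\<lambda>l. w l ^ q'"] by blast
    thus ?thesis using q' by auto
  qed
  show ?thesis
  proof (cases "A = 0 \<or> B = 0")
    case True
    then show ?thesis
    proof
      assume "A = 0"
      hence "\<forall>l\<in>{1..L}. u l = 0" using zero[of u] SA nn q' by (simp add: power_0_left)
      hence "lnorm L q (\<lambda>l. u l + v l) = lnorm L q v" by (intro lnorm_cong) auto
      thus ?thesis using A0 A_def by simp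
    next
      assume "B = 0"
      hence "\<forall>l\<in>{1..L}. v l = 0" using zero[of v] SB nn q' by (simp add: power_0_left)
      hence "lnorm L q (\<lambda>l. u l + v l) = lnorm L q u" by (intro lnorm_cong) auto
      thus ?thesis using A0 B_def by simp
    qed
  next
    case False
    hence Ap: "A > 0" and Bp: "B > 0" using A0 by auto
    define t where "t = B / (A + B)"
    define P where "P = (A + B) ^ q'"
    have t01: "0 \<le> t" "t \<le> 1" unfolding t_def using Ap Bp by auto
    have omt: "1 - t = A / (A + B)" unfolding t_def using Ap Bp by (simp add: field_simps)
    have pw: "(u l + v l) ^ q' \<le> P * ((1 - t) * (u l ^ q' / A ^ q') + t * (v l ^ q' / B ^ q'))"
      if l: "l \<in> {1..L}" for l
    proof -
      have ul: "0 \<le> u l" "0 \<le> v l" using nn l by auto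
      have "u l + v l = (A + B) * ((1 - t) * (u l / A) + t * (v l / B))"
      proof -
        have e1: "A / (A + B) * (u l / A) = u l / (A + B)" using Ap by simp
        have e2: "B / (A + B) * (v l / B) = v l / (A + B)" using Bp by simp
        have "(A + B) * (u l / (A + B) + v l / (A + B)) = u l + v l"
          using Ap Bp by (simp add: add_divide_distrib[symmetric])
        thus ?thesis unfolding omt unfolding t_def e1 e2 by simp
      qed
      hence "(u l + v l) ^ q' = P * ((1 - t) * (u l / A) + t * (v l / B)) ^ q'"
        unfolding P_def by (simp add: power_mult_distrib)
      also have "((1 - t) * (u l / A) + t * (v l / B)) ^ q' \<le> (1 - t) * (u l / A) ^ q' + t * (v l / B) ^ q'"
        using convex_onD[OF convex_pow_nonneg[of q'], of t "u l / A" "v l / B"] t01 ul Ap Bp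
        by simp
      finally show ?thesis
        unfolding P_def using Ap Bp by (simp add: power_divide mult_left_mono)
    qed
    have "(\<Sum>l\<in>{1..L}. (u l + v l) ^ q') \<le>
          (\<Sum>l\<in>{1..L}. P * ((1 - t) * (u l ^ q' / A ^ q') + t * (v l ^ q' / B ^ q')))"
      using pw by (intro sum_mono) auto
    also have "\<dots> = P * ((1 - t) * ((\<Sum>l\<in>{1..L}. u l ^ q') / A ^ q') + t * ((\<Sum>l\<in>{1..L}. v l ^ q') / B ^ q'))"
      by (simp only: sum_distrib_left[symmetric] sum.distrib sum_divide_distrib[symmetric])
    finally have S: "(\<Sum>l\<in>{1..L}. (u l + v l) ^ q') \<le> P * ((1 - t) * ((\<Sum>l\<in>{1..L}. u l ^ q') / A ^ q') + t * ((\<Sum>l\<in>{1..L}. v l ^ q') / B ^ q'))" .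
    have Lp: "0 < real L" using L by simp
    have r1: "(\<Sum>l\<in>{1..L}. u l ^ q') / A ^ q' \<le> real L"
      using SA Ap Lp by (simp add: divide_le_eq mult.commute)
    have r2: "(\<Sum>l\<in>{1..L}. v l ^ q') / B ^ q' \<le> real L"
      using SB Bp Lp by (simp add: divide_le_eq mult.commute)
    have "(1 - t) * ((\<Sum>l\<in>{1..L}. u l ^ q') / A ^ q') + t * ((\<Sum>l\<in>{1..L}. v l ^ q') / B ^ q') \<le> (1 - t) * real L + t * real L"
      using r1 r2 t01 by (intro add_mono mult_left_mono) auto
    hence "P * ((1 - t) * ((\<Sum>l\<in>{1..L}. u l ^ q') / A ^ q') + t * ((\<Sum>l\<in>{1..L}. v l ^ q') / B ^ q')) \<le> P * real L"
      using Ap Bp unfolding P_def by (intro mult_left_mono) (auto simp: algebra_simps)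
    hence "(\<Sum>l\<in>{1..L}. (u l + v l) ^ q') \<le> P * real L" using S by linarith
    hence "(\<Sum>l\<in>{1..L}. (u l + v l) ^ q') / real L \<le> P" using Lp by (simp add: divide_le_eq)
    thus ?thesis using lnorm_fin_le[of L q' "\<lambda>l. u l + v l" "A + B"] L q' nn A0 enat
      unfolding P_def A_def B_def by auto
  qed
qed


lemma lnorm_holder:
  assumes L: "1 \<le> L" and nn: "\<forall>l\<in>{1..L}. 0 \<le> f l \<and> 0 \<le> g l"
    and fm: "lnorm L m f \<le> 1" and ex: "agct_exponents k r m"
  shows "lnorm L k (\<lambda>l. f l * g l) \<le> lnorm L r g"
proof -
  have k1: "1 \<le> k" using ex unfolding agct_exponents_def by auto
  have Lp: "0 < real L" using L by simp
  have fgnn: "\<forall>l\<in>{1..L}. 0 \<le> f l * g l" using nn by auto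
  define G where "G = lnorm L r g"
  have G0: "0 \<le> G" unfolding G_def using L lnorm_nonneg by auto
  have zero: "\<forall>l\<in>{1..L}. w l = 0"
    if "\<forall>l\<in>{1..L}. 0 \<le> w l" "(\<Sum>l\<in>{1..L}. w l ^ q') / real L \<le> 0" "1 \<le> q'" for w :: "nat \<Rightarrow> real" and q'
  proof -
    have "(\<Sum>l\<in>{1..L}. w l ^ q') \<le> 0" using that L by (simp add: divide_le_0_iff)
    moreover have "\<forall>l\<in>{1..L}. 0 \<le> w l ^ q'" using that by auto
    moreover have "0 \<le> (\<Sum>l\<in>{1..L}. w l ^ q')" using that(1) by (intro sum_nonneg) auto
    ultimately have "(\<Sum>l\<in>{1..L}. w l ^ q') = 0" "\<forall>l\<in>{1..L}. 0 \<le> w l ^ q'" by linarith+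
    hence "\<forall>l\<in>{1..L}. w l ^ q' = 0"
      using sum_nonneg_eq_0_iff[of "{1..L}" "\<lambda>l. w l ^ q'"] by blast
    thus ?thesis using that(3) by auto
  qed
  from ex consider
      (A) k' m' where "k = enat k'" "m = enat m'" "k' \<le> m'" "k' = m' \<longrightarrow> r = \<infinity>"
         "k' < m' \<longrightarrow> (case r of \<infinity> \<Rightarrow> True | enat r' \<Rightarrow> real k' * real m' / real (m' - k') \<le> real r')"
    | (B) "r = \<infinity>" "m = \<infinity>"
    unfolding agct_exponents_def by blast
  then show ?thesis
  proof cases
    case B
    have f1: "\<forall>l\<in>{1..L}. f l \<le> 1"
    proof
      fix l assume l: "l \<in> {1..L}"
      have "f l \<le> Max (f ` {1..L})" using l by auto
      thus "f l \<le> 1" using fm B nn by (simp add: lnorm_inf)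
    qed
    have "\<forall>l\<in>{1..L}. 0 \<le> f l * g l \<and> f l * g l \<le> G"
    proof
      fix l assume l: "l \<in> {1..L}"
      have "g l \<le> Max (g ` {1..L})" using l by auto
      hence "g l \<le> G" unfolding G_def using B nn by (simp add: lnorm_inf)
      moreover have "f l * g l \<le> g l" using f1 nn l by (simp add: mult_left_le_one_le)
      ultimately show "0 \<le> f l * g l \<and> f l * g l \<le> G" using nn l by auto
    qed
    hence "lnorm L k (\<lambda>l. f l * g l) \<le> G" by (rule lnorm_le_const[OF L k1])
    thus ?thesis unfolding G_def .
  next
    case A
    have k'1: "1 \<le> k'" using k1 A by (simp add: one_enat_def)
    have m'1: "1 \<le> m'" using A k'1 by simp
    have Sf: "(\<Sum>l\<in>{1..L}. f l ^ m') / real L \<le> 1"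
      using lnorm_fin_ge[of m' L f 1] m'1 nn fm A by auto
    show ?thesis
    proof (cases r)
      case infinity
      have gG: "\<forall>l\<in>{1..L}. g l \<le> G"
      proof
        fix l assume l: "l \<in> {1..L}"
        have "g l \<le> Max (g ` {1..L})" using l by auto
        thus "g l \<le> G" unfolding G_def using infinity nn by (simp add: lnorm_inf)
      qed
      have pw: "(f l * g l) ^ k' \<le> (real k' / m' * f l ^ m' + (1 - real k' / m')) * G ^ k'"
        if l: "l \<in> {1..L}" for l
      proof -
        have "(f l * g l) ^ k' = f l ^ k' * g l ^ k'" by (simp add: power_mult_distrib)
        also have "\<dots> \<le> f l ^ k' * G ^ k'"
          using nn gG l by (intro mult_left_mono power_mono) auto
        also have "\<dots> \<le> (real k' / m' * f l ^ m' + (1 - real k' / m')) * G ^ k'"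
          using amgm2[of "f l" k' m'] nn l k'1 A G0 by (intro mult_right_mono) auto
        finally show ?thesis .
      qed
      have "(\<Sum>l\<in>{1..L}. (f l * g l) ^ k') \<le> (\<Sum>l\<in>{1..L}. (real k' / m' * f l ^ m' + (1 - real k' / m')) * G ^ k')"
        using pw by (intro sum_mono) auto
      also have "\<dots> = (real k' / m' * (\<Sum>l\<in>{1..L}. f l ^ m') + real L * (1 - real k' / m')) * G ^ k'"
      proof -
        have "(\<Sum>l\<in>{1..L}. (real k' / m' * f l ^ m' + (1 - real k' / m')) * G ^ k')
             = (\<Sum>l\<in>{1..L}. (real k' / m' * f l ^ m' + (1 - real k' / m'))) * G ^ k'"
          by (rule sum_distrib_right[symmetric])
        also have "(\<Sum>l\<in>{1..L}. (real k' / m' * f l ^ m' + (1 - real k' / m'))) = real k' / m' * (\<Sum>l\<in>{1..L}. f l ^ m') + real L * (1 - real k' / m')"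
          by (simp add: sum.distrib sum_distrib_left)
        finally show ?thesis .
      qed
      also have "\<dots> \<le> (real k' / m' * real L + real L * (1 - real k' / m')) * G ^ k'"
      proof -
        have "(\<Sum>l\<in>{1..L}. f l ^ m') \<le> real L" using Sf Lp by (simp add: divide_le_eq)
        thus ?thesis using G0 by (intro mult_right_mono add_mono mult_left_mono) auto
      qed
      also have "\<dots> = real L * G ^ k'" by (simp add: algebra_simps)
      finally have "(\<Sum>l\<in>{1..L}. (f l * g l) ^ k') / real L \<le> G ^ k'" using Lp by (simp add: divide_le_eq mult.commute)
      thus ?thesis using lnorm_fin_le[of L k' "\<lambda>l. f l * g l" G] L k'1 fgnn G0 A G_def by auto
    next
      case (enat r')
      have km: "k' < m'" using A enat by auto
      hence rr: "real k' * real m' / real (m' - k') \<le> real r'" using A enat by auto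
      have mk: "real (m' - k') = real m' - real k'" using km by simp
      have mkp: "0 < real m' - real k'" using km by simp
      have "real k' * real m' \<le> real r' * (real m' - real k')" using rr mk mkp by (simp add: divide_le_eq)
      hence r'1: "1 \<le> r'"
      proof (rule contrapos_pp)
        assume "\<not> 1 \<le> r'"
        hence "r' = 0" by simp
        moreover have "0 < real k' * real m'" using k'1 m'1 by simp
        ultimately show "\<not> real k' * real m' \<le> real r' * (real m' - real k')" by simp
      qed
      have r'p: "0 < real r'" using r'1 by simp
      have m'p: "0 < real m'" using m'1 by simp
      have kk: "real k' / m' + real k' / r' \<le> 1"
      proof -
        have "real k' * real m' \<le> real r' * (real m' - real k')" by fact
        hence "real k' * r' + real k' * m' \<le> real m' * r'" by (simp add: algebra_simps)
        thus ?thesis using r'p m'p by (simp add: field_simps)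
      qed
      have Sg: "(\<Sum>l\<in>{1..L}. g l ^ r') / real L \<le> G ^ r'"
        using lnorm_fin_ge[of r' L g G] r'1 nn enat G_def by auto
      show ?thesis
      proof (cases "G = 0")
        case True
        have "\<forall>l\<in>{1..L}. g l = 0" using zero[of g r'] Sg True nn r'1 by (simp add: power_0_left)
        hence "\<forall>l\<in>{1..L}. 0 \<le> f l * g l \<and> f l * g l \<le> 0" by auto
        thus ?thesis using lnorm_le_const[OF L k1, of "\<lambda>l. f l * g l" 0] True G_def by simp
      next
        case False
        hence Gp: "0 < G" using G0 by simp
        define h where "h l = g l / G" for l
        have hnn: "\<forall>l\<in>{1..L}. 0 \<le> h l" unfolding h_def using nn Gp by auto
        have Sh: "(\<Sum>l\<in>{1..L}. h l ^ r') \<le> real L"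
        proof -
          have "(\<Sum>l\<in>{1..L}. h l ^ r') = (\<Sum>l\<in>{1..L}. g l ^ r') / G ^ r'"
            unfolding h_def by (simp add: power_divide sum_divide_distrib)
          also have "\<dots> \<le> real L" using Sg Gp Lp by (simp add: divide_le_eq mult.commute)
          finally show ?thesis .
        qed
        have Sf': "(\<Sum>l\<in>{1..L}. f l ^ m') \<le> real L" using Sf Lp by (simp add: divide_le_eq)
        have "(\<Sum>l\<in>{1..L}. f l ^ k' * h l ^ k') \<le>
              (\<Sum>l\<in>{1..L}. real k' / m' * f l ^ m' + real k' / r' * h l ^ r' + (1 - real k' / m' - real k' / r'))"
          using amgm3[of _ _ k' m' r'] nn hnn k'1 A r'1 kk by (intro sum_mono) auto
        also have "\<dots> = real k' / m' * (\<Sum>l\<in>{1..L}. f l ^ m') + real k' / r' * (\<Sum>l\<in>{1..L}. h l ^ r') + real L * (1 - real k' / m' - real k' / r')"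
          by (simp add: sum.distrib sum_distrib_left)
        also have "\<dots> \<le> real k' / m' * real L + real k' / r' * real L + real L * (1 - real k' / m' - real k' / r')"
          using Sf' Sh by (intro add_mono mult_left_mono) auto
        also have "\<dots> = real L" by (simp add: algebra_simps)
        finally have H: "(\<Sum>l\<in>{1..L}. f l ^ k' * h l ^ k') \<le> real L" .
        have "(\<Sum>l\<in>{1..L}. (f l * g l) ^ k') = G ^ k' * (\<Sum>l\<in>{1..L}. f l ^ k' * h l ^ k')"
          unfolding h_def using Gp by (simp add: sum_distrib_left power_mult_distrib power_divide)
        also have "\<dots> \<le> G ^ k' * real L" using H G0 by (intro mult_left_mono) auto
        finally have "(\<Sum>l\<in>{1..L}. (f l * g l) ^ k') / real L \<le> G ^ k'" using Lp by (simp add: divide_le_eq)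
        thus ?thesis using lnorm_fin_le[of L k' "\<lambda>l. f l * g l" G] L k'1 fgnn G0 A G_def by auto
      qed
    qed
  qed
qed




definition Sset :: "(int \<Rightarrow> 'a) \<Rightarrow> nat \<Rightarrow> 'a list \<Rightarrow> int set" where
  "Sset s n w = {t. int (length w) \<le> t \<and> t \<le> int n - 1 \<and> (\<forall>i<length w. s (t - int i) = w ! i)}"

lemma Sset_finite: "finite (Sset s n w)"
  by (rule finite_subset[of _ "{int (length w)..int n - 1}"]) (auto simp: Sset_def)

lemma Nocc_Sset: "Nocc s (int n - 1) w = card (Sset s n w)"
  unfolding Nocc_def Sset_def by simp

lemma Nocc_cons: "Nocc s (int n) (a # w) = card {t \<in> Sset s n w. s (t + 1) = a}"
proof -
  have "{t::int. int (length (a # w)) \<le> t \<and> t \<le> int n \<and> (\<forall>i<length (a # w). s (t - int i) = (a # w) ! i)}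
        = (\<lambda>t. t + 1) ` {t \<in> Sset s n w. s (t + 1) = a}"
  proof (rule set_eqI, rule iffI)
    fix t assume "t \<in> {t::int. int (length (a # w)) \<le> t \<and> t \<le> int n \<and> (\<forall>i<length (a # w). s (t - int i) = (a # w) ! i)}"
    hence h: "int (length w) + 1 \<le> t" "t \<le> int n" "s t = a" "\<forall>i<length w. s (t - int (Suc i)) = w ! i"
      by (auto simp: All_less_Suc2)
    have "\<forall>i<length w. s (t - 1 - int i) = w ! i"
    proof (intro allI impI)
      fix i assume "i < length w"
      hence "s (t - int (Suc i)) = w ! i" using h(4) by blast
      moreover have eq: "t - 1 - int i = t - int (Suc i)" by simp
      ultimately show "s (t - 1 - int i) = w ! i" by (simp only: eq)
    qed
    hence "t - 1 \<in> {t \<in> Sset s n w. s (t + 1) = a}" using h by (auto simp: Sset_def)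
    thus "t \<in> (\<lambda>t. t + 1) ` {t \<in> Sset s n w. s (t + 1) = a}" by (intro image_eqI[of _ _ "t - 1"]) auto
  next
    fix t assume "t \<in> (\<lambda>t. t + 1) ` {t \<in> Sset s n w. s (t + 1) = a}"
    then obtain u where u: "t = u + 1" "u \<in> Sset s n w" "s (u + 1) = a" by auto
    have "\<forall>i<length w. s (t - int (Suc i)) = w ! i"
    proof (intro allI impI)
      fix i assume "i < length w"
      hence "s (u - int i) = w ! i" using u(2) by (auto simp: Sset_def)
      moreover have eq: "t - int (Suc i) = u - int i" using u(1) by simp
      ultimately show "s (t - int (Suc i)) = w ! i" by (simp only: eq)
    qed
    thus "t \<in> {t::int. int (length (a # w)) \<le> t \<and> t \<le> int n \<and> (\<forall>i<length (a # w). s (t - int i) = (a # w) ! i)}"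
      using u by (auto simp: Sset_def All_less_Suc2)
  qed
  moreover have "inj_on (\<lambda>t::int. t + 1) A" for A by (auto simp: inj_on_def)
  ultimately show ?thesis unfolding Nocc_def by (simp add: card_image)
qed

lemma sum_Nocc_cons: "(\<Sum>a\<in>(UNIV::'a::finite set). Nocc s (int n) (a # w)) = Nocc s (int n - 1) w"
proof -
  have "(\<Sum>a\<in>(UNIV::'a set). card {t \<in> Sset s n w. s (t + 1) = a})
      = (\<Sum>a\<in>(UNIV::'a set). \<Sum>t\<in>{t. t \<in> Sset s n w \<and> s (t + 1) = a}. (1::nat))"
    by simp
  also have "\<dots> = (\<Sum>t\<in>Sset s n w. (1::nat))"
    by (rule sum.group) (auto simp: Sset_finite)
  finally show ?thesis by (simp add: Nocc_cons Nocc_Sset)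
qed

lemma phat_dist:
  assumes "l \<in> {1..L}"
  shows "prob_dist (phat L X n l w)"
proof (cases "allpos L X n w")
  case False thus ?thesis unfolding prob_dist_def phat_def by simp
next
  case True
  hence N: "0 < Nocc (X l) (int n - 1) w" using assms unfolding allpos_def by blast
  have "(\<Sum>a\<in>UNIV. real (Nocc (X l) (int n) (a # w)) / real (Nocc (X l) (int n - 1) w))
      = real (\<Sum>a\<in>UNIV. Nocc (X l) (int n) (a # w)) / real (Nocc (X l) (int n - 1) w)"
    by (simp add: sum_divide_distrib)
  also have "\<dots> = 1" using N by (simp only: sum_Nocc_cons) simp
  finally show ?thesis unfolding prob_dist_def phat_def using True by simp
qed

lemma pbar_dist:
  assumes "l \<in> {1..L}" and pd: "\<forall>y. prob_dist (p l y)"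
  shows "prob_dist (pbar L X p n l w)"
proof (cases "allpos L X n w")
  case False thus ?thesis unfolding prob_dist_def pbar_def by simp
next
  case True
  hence N: "0 < Nocc (X l) (int n - 1) w" using assms unfolding allpos_def by blast
  define P where "P i = (\<forall>j<length w. X l (i - 1 - int j) = w ! j)" for i
  define I where "I = {int (length w) + 1 .. int n}"
  have nn: "\<forall>a. 0 \<le> pbar L X p n l w a"
    using True pd unfolding pbar_def prob_dist_def by (auto intro!: divide_nonneg_nonneg sum_nonneg)
  have "(\<Sum>a\<in>UNIV. \<Sum>i\<in>I. (if P i then p l (past (X l) i) a else 0))
      = (\<Sum>i\<in>I. \<Sum>a\<in>UNIV. (if P i then p l (past (X l) i) a else 0))" by (rule sum.swap)
  also have "\<dots> = (\<Sum>i\<in>I. (if P i then 1 else 0))"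
    using pd unfolding prob_dist_def by (intro sum.cong) auto
  also have "\<dots> = real (card {i \<in> I. P i})"
    by (simp add: sum.inter_filter[symmetric] I_def)
  also have "{i \<in> I. P i} = (\<lambda>t. t + 1) ` Sset (X l) n w"
  proof (rule set_eqI, rule iffI)
    fix i assume "i \<in> {i \<in> I. P i}"
    hence "i - 1 \<in> Sset (X l) n w" unfolding I_def P_def Sset_def by auto
    thus "i \<in> (\<lambda>t. t + 1) ` Sset (X l) n w" by (intro image_eqI[of _ _ "i - 1"]) auto
  next
    fix i assume "i \<in> (\<lambda>t. t + 1) ` Sset (X l) n w"
    thus "i \<in> {i \<in> I. P i}" unfolding I_def P_def Sset_def by auto
  qed
  also have "card ((\<lambda>t::int. t + 1) ` Sset (X l) n w) = card (Sset (X l) n w)"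
    by (rule card_image) (auto simp: inj_on_def)
  finally have S: "(\<Sum>a\<in>UNIV. \<Sum>i\<in>I. (if P i then p l (past (X l) i) a else 0))
      = real (Nocc (X l) (int n - 1) w)" by (simp add: Nocc_Sset)
  have "sum (pbar L X p n l w) UNIV
      = (\<Sum>a\<in>UNIV. (\<Sum>i\<in>I. (if P i then p l (past (X l) i) a else 0)) / real (Nocc (X l) (int n - 1) w))"
    unfolding pbar_def using True by (simp add: P_def I_def)
  also have "\<dots> = 1" using S N by (simp add: sum_divide_distrib[symmetric])
  finally show ?thesis using nn unfolding prob_dist_def by simp
qed




lemma lnorm_mono:
  assumes L: "1 \<le> L" and q: "1 \<le> q" and ab: "\<forall>l\<in>{1..L}. 0 \<le> a l \<and> a l \<le> b l"
  shows "lnorm L q a \<le> lnorm L q b"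
proof (cases q)
  case infinity
  have "\<forall>l\<in>{1..L}. 0 \<le> a l \<and> a l \<le> lnorm L q b"
  proof
    fix l assume l: "l \<in> {1..L}"
    have bl: "b l \<le> Max (b ` {1..L})" using l by auto
    have eq: "lnorm L q b = Max (b ` {1..L})" using infinity ab lnorm_inf[of L b] by force
    have "0 \<le> a l" "a l \<le> b l" using ab l by auto
    thus "0 \<le> a l \<and> a l \<le> lnorm L q b" using bl eq by linarith
  qed
  thus ?thesis using lnorm_le_const[OF L q] by blast
next
  case (enat q')
  have q': "1 \<le> q'" using q enat by (simp add: one_enat_def)
  have bnn: "\<forall>l\<in>{1..L}. 0 \<le> b l" using ab by force
  have "(\<Sum>l\<in>{1..L}. a l ^ q') \<le> (\<Sum>l\<in>{1..L}. b l ^ q')" using ab by (intro sum_mono power_mono) auto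
  hence "(\<Sum>l\<in>{1..L}. a l ^ q') / real L \<le> (\<Sum>l\<in>{1..L}. b l ^ q') / real L" by (simp add: divide_right_mono)
  also have "\<dots> \<le> lnorm L q b ^ q'" using lnorm_fin_ge[of q' L b "lnorm L q b"] q' bnn enat by simp
  finally show ?thesis using lnorm_fin_le[of L q' a "lnorm L q b"] L q' ab enat lnorm_nonneg[OF L] by auto
qed

lemma sm_basic:
  assumes "simplex_metric01 dl" "prob_dist q" "prob_dist q'"
  shows "0 \<le> dl q q'" "dl q q' \<le> 1" "dl q q' = dl q' q" "dl q q = 0"
  using assms unfolding simplex_metric01_def by blast+

lemma sm_tri:
  assumes "simplex_metric01 dl" "prob_dist q" "prob_dist q'" "prob_dist q''"
  shows "dl q q'' \<le> dl q q' + dl q' q''"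
  using assms unfolding simplex_metric01_def by blast

theorem corollary3p1:
  fixes L n :: nat
    and X :: "nat \<Rightarrow> int \<Rightarrow> 'a::finite"
    and p :: "nat \<Rightarrow> (nat \<Rightarrow> 'a) \<Rightarrow> 'a \<Rightarrow> real"
    and d :: "nat \<Rightarrow> ('a \<Rightarrow> real) \<Rightarrow> ('a \<Rightarrow> real) \<Rightarrow> real"
    and conf :: "nat \<Rightarrow> 'a str \<Rightarrow> real"
    and k r m :: enat
    and T :: "'a list set"
    and x :: "nat \<Rightarrow> 'a"
  assumes L: "1 \<le> L"
    and p_dist: "\<forall>l\<in>{1..L}. \<forall>y. prob_dist (p l y)"
    and d_metric: "\<forall>l\<in>{1..L}. simplex_metric01 (d l)"
    and conf_bounds: "\<forall>l\<in>{1..L}. \<forall>w. 0 \<le> conf l w \<and> conf l w \<le> 1"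
    and conf_mono: "\<forall>l\<in>{1..L}. \<forall>w w'. str_suffix w w' \<longrightarrow> conf l w \<le> conf l w'"
    and exps: "agct_exponents k r m"
    and optimal: "is_optimal_tree L k r d p X n conf T"
    and good: "Good L m d p X n conf"
  shows "lnorm L k (\<lambda>l. d l (phat L X n l (tree_node T x)) (p l x))
           \<le> capp L k d p X n (tree_node T x) + lnorm L r (\<lambda>l. conf l (Fin (tree_node T x)))"
proof -
  define w where "w = tree_node T x"
  define t where "t l = d l (phat L X n l w) (p l x)" for l
  define u where "u l = d l (phat L X n l w) (pbar L X p n l w)" for l
  define v where "v l = d l (pbar L X p n l w) (p l x)" for l
  have k1: "1 \<le> k" using exps unfolding agct_exponents_def by auto
  have dh: "prob_dist (phat L X n l w)" if "l \<in> {1..L}" for l using phat_dist[OF that] .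
  have db: "prob_dist (pbar L X p n l w)" if "l \<in> {1..L}" for l
    using pbar_dist[OF that] p_dist that by blast
  have dp: "prob_dist (p l y)" if "l \<in> {1..L}" for l y using p_dist that by blast
  have dm: "simplex_metric01 (d l)" if "l \<in> {1..L}" for l using d_metric that by blast
  have tuv: "\<forall>l\<in>{1..L}. 0 \<le> t l \<and> t l \<le> u l + v l"
  proof
    fix l assume l: "l \<in> {1..L}"
    show "0 \<le> t l \<and> t l \<le> u l + v l" unfolding t_def u_def v_def
      using sm_basic(1)[OF dm[OF l] dh[OF l] dp[OF l]] sm_tri[OF dm[OF l] dh[OF l] db[OF l] dp[OF l]] by simp
  qed
  have uvnn: "\<forall>l\<in>{1..L}. 0 \<le> u l \<and> 0 \<le> v l"
  proof
    fix l assume l: "l \<in> {1..L}"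
    show "0 \<le> u l \<and> 0 \<le> v l" unfolding u_def v_def
      using sm_basic(1)[OF dm[OF l] dh[OF l] db[OF l]] sm_basic(1)[OF dm[OF l] db[OF l] dp[OF l]] by simp
  qed
  have step1: "lnorm L k t \<le> lnorm L k u + lnorm L k v"
    using lnorm_mono[OF L k1, of t "\<lambda>l. u l + v l"] tuv lnorm_triangle[OF L k1 uvnn] by linarith
  define S where "S = {lnorm L k (\<lambda>l. d l (p l (z l)) (pbar L X p n l w)) | z. \<forall>l\<in>{1..L}. extends (z l) w}"
  have "lnorm L k v \<in> S"
  proof -
    have "\<forall>l\<in>{1..L}. v l = d l (p l ((\<lambda>_. x) l)) (pbar L X p n l w)"
    proof
      fix l assume l: "l \<in> {1..L}"
      show "v l = d l (p l ((\<lambda>_. x) l)) (pbar L X p n l w)" unfolding v_def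
        using sm_basic(3)[OF dm[OF l] db[OF l] dp[OF l]] by simp
    qed
    hence "lnorm L k v = lnorm L k (\<lambda>l. d l (p l ((\<lambda>_. x) l)) (pbar L X p n l w))"
      by (rule lnorm_cong)
    moreover have "\<forall>l\<in>{1..L}. extends ((\<lambda>_. x) l) w"
      unfolding w_def tree_node_def extends_def by simp
    ultimately show ?thesis unfolding S_def by (intro CollectI exI[of _ "\<lambda>_. x"]) simp
  qed
  moreover have "bdd_above S"
  proof (rule bdd_aboveI[of _ 1])
    fix s assume "s \<in> S"
    then obtain z where s: "s = lnorm L k (\<lambda>l. d l (p l (z l)) (pbar L X p n l w))" unfolding S_def by blast
    have "\<forall>l\<in>{1..L}. 0 \<le> d l (p l (z l)) (pbar L X p n l w) \<and> d l (p l (z l)) (pbar L X p n l w) \<le> 1"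
    proof
      fix l assume l: "l \<in> {1..L}"
      show "0 \<le> d l (p l (z l)) (pbar L X p n l w) \<and> d l (p l (z l)) (pbar L X p n l w) \<le> 1"
        using sm_basic(1,2)[OF dm[OF l] dp[OF l] db[OF l]] by simp
    qed
    thus "s \<le> 1" unfolding s by (rule lnorm_le_const[OF L k1])
  qed
  ultimately have step2: "lnorm L k v \<le> capp L k d p X n w"
    unfolding capp_def S_def[symmetric] by (rule cSup_upper)
  have G0: "0 \<le> lnorm L r (\<lambda>l. conf l (Fin w))" by (rule lnorm_nonneg[OF L])
  have step3: "lnorm L k u \<le> lnorm L r (\<lambda>l. conf l (Fin w))"
  proof (cases "allpos L X n w")
    case False
    have "\<forall>l\<in>{1..L}. 0 \<le> u l \<and> u l \<le> 0"
    proof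
      fix l assume l: "l \<in> {1..L}"
      have "phat L X n l w = pbar L X p n l w" using False unfolding phat_def pbar_def by simp
      thus "0 \<le> u l \<and> u l \<le> 0" unfolding u_def using sm_basic(4)[OF dm[OF l] db[OF l] db[OF l]] by simp
    qed
    hence "lnorm L k u \<le> 0" by (rule lnorm_le_const[OF L k1])
    thus ?thesis using G0 by linarith
  next
    case True
    define f where "f l = d l (pbar L X p n l w) (phat L X n l w) / conf l (Fin w)" for l
    define g where "g l = conf l (Fin w)" for l
    have gd: "\<forall>l\<in>{1..L}. conf l (Fin w) = 0 \<longrightarrow> d l (pbar L X p n l w) (phat L X n l w) = 0"
      and fm: "lnorm L m f \<le> 1" using good True unfolding Good_def f_def by blast+
    have fgnn: "\<forall>l\<in>{1..L}. 0 \<le> f l \<and> 0 \<le> g l"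
    proof
      fix l assume l: "l \<in> {1..L}"
      have "0 \<le> d l (pbar L X p n l w) (phat L X n l w)" by (rule sm_basic(1)[OF dm[OF l] db[OF l] dh[OF l]])
      moreover have "0 \<le> conf l (Fin w)" using conf_bounds l by blast
      ultimately show "0 \<le> f l \<and> 0 \<le> g l" unfolding f_def g_def by simp
    qed
    have "\<forall>l\<in>{1..L}. u l = f l * g l"
    proof
      fix l assume l: "l \<in> {1..L}"
      have sym: "u l = d l (pbar L X p n l w) (phat L X n l w)"
        unfolding u_def by (rule sm_basic(3)[OF dm[OF l] dh[OF l] db[OF l]])
      show "u l = f l * g l"
      proof (cases "conf l (Fin w) = 0")
        case True thus ?thesis using gd l sym unfolding f_def g_def by simp
      next
        case False thus ?thesis using sym unfolding f_def g_def by simp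
      qed
    qed
    hence "lnorm L k u = lnorm L k (\<lambda>l. f l * g l)" by (rule lnorm_cong)
    also have "\<dots> \<le> lnorm L r g" by (rule lnorm_holder[OF L fgnn fm exps])
    finally show ?thesis unfolding g_def .
  qed
  have "lnorm L k t \<le> capp L k d p X n w + lnorm L r (\<lambda>l. conf l (Fin w))"
    using step1 step2 step3 by linarith
  thus ?thesis unfolding t_def w_def .
qed

end
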